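(* Let $SP_t(k)$ denote the smallest $n$ such that $PPL_t(n)=k$, and write $(w)_4$ for the integer whose base-4 representation is the digit string $w$. Then $SP_t(3k+2)=((12)^k2)_4$ for all $k\geq 0$; $SP_t(3k)=(1(12)^{k-1}2)_4$ for all $k\geq 1$; and $SP_t(3k+1)=(2(12)^{k-1}2)_4$ for all $k\geq 1$. Here $(12)^k$ denotes the digit string $12$ repeated $k$ times.
   Context: The Thue-Morse word $t=t[1]t[2]\cdots=abbabaabbaababba\cdots$ is the fixed point starting with $a$ of the morphism $a\mapsto abba,\ b\mapsto baab$. A palindrome is a word $p=p[1]\cdots p[n]$ with $p[i]=p[n-i+1]$ for all $i$. $PPL_t(n)$ is the minimal number of nonempty palindromes whose concatenation equals the prefix of $t$ of length $n$. *)

theory Defs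
  imports Main
begin

datatype letter = A | B

fun tm_morph :: "letter \<Rightarrow> letter list" where
  "tm_morph A = [A, B, B, A]"
| "tm_morph B = [B, A, A, B]"

(* n-fold iterate of the morphism applied to the letter a; it has length 4^n
   and is a prefix of the fixed point t *)
fun tm_iter :: "nat \<Rightarrow> letter list" where
  "tm_iter 0 = [A]"
| "tm_iter (Suc n) = concat (map tm_morph (tm_iter n))"

(* prefix of length n of the Thue-Morse word t (since 4^n \<ge> n) *)
definition tm_prefix :: "nat \<Rightarrow> letter list" where
  "tm_prefix n = take n (tm_iter n)"

definition palindrome :: "'a list \<Rightarrow> bool" where
  "palindrome p \<longleftrightarrow> rev p = p"

definition pal_length :: "'a list \<Rightarrow> nat" where
  "pal_length w = (LEAST k. \<exists>ps. length ps = k \<and> concat ps = w \<and>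
                      (\<forall>p\<in>set ps. p \<noteq> [] \<and> palindrome p))"

definition PPL_t :: "nat \<Rightarrow> nat" where
  "PPL_t n = pal_length (tm_prefix n)"

definition SP_t :: "nat \<Rightarrow> nat" where
  "SP_t k = (LEAST n. PPL_t n = k)"

definition base4 :: "nat list \<Rightarrow> nat" where
  "base4 ds = foldl (\<lambda>acc d. 4 * acc + d) 0 ds"

end

theory Submission
  imports Defs
begin


function tb :: "nat \<Rightarrow> bool" where
  "tb n = (if n = 0 then False else if even n then tb (n div 2) else \<not> tb (n div 2))"
  by auto
termination by (relation "measure id") auto

declare tb.simps[simp del]

lemma tb0[simp]: "tb 0 = False" by (simp add: tb.simps)

lemma tb_2: "tb (2*m) = tb m"
  by (cases "m = 0") (auto simp: tb.simps[of "2*m"])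

lemma tb_2s: "tb (2*m+1) = (\<not> tb m)"
proof -
  have "tb (2*m+1) = (if 2*m+1 = 0 then False else if even (2*m+1) then tb ((2*m+1) div 2) else \<not> tb ((2*m+1) div 2))"
    by (rule tb.simps)
  also have "\<dots> = (\<not> tb m)" by simp
  finally show ?thesis .
qed

lemma tb_4: "tb (4*m) = tb m" "tb (4*m+1) = (\<not> tb m)" "tb (4*m+2) = (\<not> tb m)" "tb (4*m+3) = tb m"
proof -
  have e1: "4*m = 2*(2*m)" "4*m+1 = 2*(2*m)+1" "4*m+2 = 2*(2*m+1)" "4*m+3 = 2*(2*m+1)+1" by auto
  show "tb (4*m) = tb m" "tb (4*m+1) = (\<not> tb m)" "tb (4*m+2) = (\<not> tb m)" "tb (4*m+3) = tb m"
    by (metis e1(1) tb_2, metis e1(2) tb_2 tb_2s, metis e1(3) tb_2 tb_2s, metis e1(4) tb_2 tb_2s)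
qed

lemma tb_4gen: "b < 4 \<Longrightarrow> tb (4*x + b) = (tb x \<noteq> (b = 1 \<or> b = 2))"
  using tb_4[of x] by (cases b; cases "b - 1"; cases "b - 2"; auto simp: numeral_eq_Suc)

lemma no_triple: "\<not> (tb m = tb (m+1) \<and> tb (m+1) = tb (m+2))"
proof (cases "even m")
  case True then obtain a where "m = 2*a" by auto
  then show ?thesis using tb_2[of a] tb_2s[of a] by auto
next
  case False then obtain a where "m = 2*a+1" using oddE by blast
  then show ?thesis using tb_2[of "a+1"] tb_2s[of "a+1"] by (auto simp: algebra_simps)
qed

definition L :: "nat \<Rightarrow> letter" where "L i = (if tb i then B else A)"

lemma L_eq: "L x = L y \<longleftrightarrow> tb x = tb y" by (auto simp: L_def)

lemma concat_morph: "concat (map (\<lambda>a. tm_morph (L a)) [0..<m]) = map L [0..<4*m]"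
proof (induction m)
  case 0 then show ?case by simp
next
  case (Suc m)
  have u: "[0..<4*Suc m] = [0..<4*m] @ [4*m, 4*m+1, 4*m+2, 4*m+3]"
    by (simp add: upt_rec[of "4*m"] upt_add_eq_append[of 0 "4*m" 4, simplified] numeral_eq_Suc)
  have "tm_morph (L m) = [L (4*m), L (4*m+1), L (4*m+2), L (4*m+3)]"
    using tb_4[of m] by (cases "tb m") (auto simp: L_def)
  then have "concat (map (\<lambda>a. tm_morph (L a)) [0..<Suc m]) = map L [0..<4*m] @ [L (4*m), L (4*m+1), L (4*m+2), L (4*m+3)]"
    using Suc by simp
  also have "\<dots> = map L [0..<4*Suc m]" unfolding u by simp
  finally show ?case .
qed

lemma tm_iter_eq: "tm_iter n = map L [0..<4^n]"
proof (induction n)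
  case 0 then show ?case by (simp add: L_def)
next
  case (Suc n)
  have "tm_iter (Suc n) = concat (map (\<lambda>a. tm_morph (L a)) [0..<4^n])" using Suc by (simp add: comp_def)
  then show ?case by (simp add: concat_morph)
qed

lemma tm_prefix_eq: "tm_prefix n = map L [0..<n]"
proof -
  have "n < 2^n" by (rule less_exp)
  also have "(2::nat)^n \<le> 4^n" by (simp add: power_mono)
  finally have "n \<le> 4^n" by simp
  then show ?thesis by (simp add: tm_prefix_def tm_iter_eq take_map take_upt)
qed



definition validf :: "'a list list \<Rightarrow> bool" where
  "validf ps \<longleftrightarrow> (\<forall>p\<in>set ps. p \<noteq> [] \<and> palindrome p)"

lemma pal_length_ex: "\<exists>ps. length ps = pal_length w \<and> concat ps = w \<and> validf ps"
proof -
  have *: "\<exists>ps. length ps = length w \<and> concat ps = w \<and> validf ps"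
    by (rule exI[of _ "map (\<lambda>x. [x]) w"]) (auto simp: validf_def palindrome_def)
  show ?thesis unfolding pal_length_def validf_def by (rule LeastI_ex[where P = "\<lambda>k. \<exists>ps. length ps = k \<and> concat ps = w \<and> (\<forall>p\<in>set ps. p \<noteq> [] \<and> palindrome p)"]) (use *[unfolded validf_def] in blast)
qed

lemma pal_length_le: "concat ps = w \<Longrightarrow> validf ps \<Longrightarrow> pal_length w \<le> length ps"
  unfolding pal_length_def validf_def by (rule Least_le) auto

lemma pal_length_Nil: "pal_length [] = 0"
  using pal_length_le[of "[]" "[]"] by (simp add: validf_def)

lemma pal_length_snoc: "p \<noteq> [] \<Longrightarrow> palindrome p \<Longrightarrow> pal_length (u @ p) \<le> pal_length u + 1"
proof -
  assume p: "p \<noteq> []" "palindrome p"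
  obtain ps where ps: "length ps = pal_length u" "concat ps = u" "validf ps" using pal_length_ex by blast
  have "pal_length (u @ p) \<le> length (ps @ [p])"
    by (rule pal_length_le) (use ps p in \<open>auto simp: validf_def\<close>)
  then show ?thesis using ps by simp
qed

lemma pal_length_dec: "w \<noteq> [] \<Longrightarrow> \<exists>u p. w = u @ p \<and> p \<noteq> [] \<and> palindrome p \<and> pal_length w = pal_length u + 1"
proof -
  assume w: "w \<noteq> []"
  obtain ps where ps: "length ps = pal_length w" "concat ps = w" "validf ps" using pal_length_ex by blast
  have "ps \<noteq> []" using ps w by auto
  then obtain ps' p where pp: "ps = ps' @ [p]" by (metis rev_exhaust)
  have p: "p \<noteq> []" "palindrome p" using ps(3) pp by (auto simp: validf_def)
  have "pal_length (concat ps') \<le> length ps'"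
    by (rule pal_length_le) (use ps(3) pp in \<open>auto simp: validf_def\<close>)
  moreover have "pal_length w \<le> pal_length (concat ps') + 1"
    using pal_length_snoc[OF p, of "concat ps'"] ps(2) pp by simp
  ultimately have "pal_length w = pal_length (concat ps') + 1" using ps(1) pp by simp
  then show ?thesis using p ps(2) pp by auto
qed

definition tpal :: "nat \<Rightarrow> nat \<Rightarrow> bool" where
  "tpal i j \<longleftrightarrow> (\<forall>k < j - i. tb (i + k) = tb (j - 1 - k))"

lemma pal_map_L: "i \<le> j \<Longrightarrow> palindrome (map L [i..<j]) \<longleftrightarrow> tpal i j"
proof -
  assume ij: "i \<le> j"
  have "palindrome (map L [i..<j]) \<longleftrightarrow> (\<forall>k < j - i. rev (map L [i..<j]) ! k = map L [i..<j] ! k)"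
    unfolding palindrome_def by (simp add: list_eq_iff_nth_eq)
  also have "\<dots> \<longleftrightarrow> (\<forall>k < j - i. L (j - 1 - k) = L (i + k))"
  proof -
    have "rev (map L [i..<j]) ! k = L (j - 1 - k)" if "k < j - i" for k
      using that ij by (simp add: rev_nth)
    then show ?thesis by auto
  qed
  finally show ?thesis unfolding tpal_def L_eq by auto
qed

definition PP :: "nat \<Rightarrow> nat" where "PP n = pal_length (map L [0..<n])"

lemma PPL_PP: "PPL_t n = PP n" by (simp add: PPL_t_def PP_def tm_prefix_eq)

lemma PP0: "PP 0 = 0" by (simp add: PP_def pal_length_Nil)

lemma PP_step: "i < N \<Longrightarrow> tpal i N \<Longrightarrow> PP N \<le> PP i + 1"
proof -
  assume a: "i < N" "tpal i N"
  have e: "map L [0..<N] = map L [0..<i] @ map L [i..<N]"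
  proof -
    obtain d where "N = i + d" using a(1) less_imp_add_positive by blast
    then show ?thesis using upt_add_eq_append[of 0 i d] by simp
  qed
  have "palindrome (map L [i..<N])" using pal_map_L a by simp
  moreover have "map L [i..<N] \<noteq> []" using a by simp
  ultimately show ?thesis unfolding PP_def e using pal_length_snoc[of "map L [i..<N]" "map L [0..<i]"] by simp
qed

lemma PP_dec: "0 < N \<Longrightarrow> \<exists>i < N. tpal i N \<and> PP N = PP i + 1"
proof -
  assume N: "0 < N"
  then have "map L [0..<N] \<noteq> []" by simp
  then obtain u p where up: "map L [0..<N] = u @ p" "p \<noteq> []" "palindrome p"
     "pal_length (map L [0..<N]) = pal_length u + 1"
    using pal_length_dec by blast
  define i where "i = length u"
  have "length (map L [0..<N]) = length u + length p" using up(1) by simp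
  then have iN: "i < N" using up(2) unfolding i_def by simp
  have "u = take i (map L [0..<N])" using up(1) unfolding i_def by simp
  then have u: "u = map L [0..<i]" using iN by (simp add: take_map take_upt)
  have "p = drop i (map L [0..<N])" using up(1) unfolding i_def by simp
  then have p: "p = map L [i..<N]" using iN by (simp add: drop_map)
  show ?thesis using up(3,4) iN pal_map_L[of i N] unfolding PP_def u p by auto
qed



lemma tpal_at: "tpal i j \<Longrightarrow> k < j - i \<Longrightarrow> a = i + k \<Longrightarrow> b = j - 1 - k \<Longrightarrow> tb a = tb b"
  unfolding tpal_def by simp

lemma tb2x: "x = 2*m \<Longrightarrow> tb x = tb m" "x = 2*m+1 \<Longrightarrow> tb x = (\<not> tb m)"
  by (metis tb_2, metis tb_2s)

lemma tb4x: "x = 4*m \<Longrightarrow> tb x = tb m" "x = 4*m+1 \<Longrightarrow> tb x = (\<not> tb m)"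
  "x = 4*m+2 \<Longrightarrow> tb x = (\<not> tb m)" "x = 4*m+3 \<Longrightarrow> tb x = tb m"
  by (metis tb_4(1), metis tb_4(2), metis tb_4(3), metis tb_4(4))

lemma tpal_single: "tpal i (Suc i)" by (simp add: tpal_def)

lemma tpal_inner: "tpal i j \<Longrightarrow> tpal (i+1) (j-1)"
  unfolding tpal_def
proof (intro allI impI)
  fix k assume h: "\<forall>k<j - i. tb (i + k) = tb (j - 1 - k)" and k: "k < j - 1 - (i + 1)"
  show "tb (i + 1 + k) = tb (j - 1 - 1 - k)"
    by (rule tpal_at[of i j "k+1"]) (use h k in \<open>auto simp: tpal_def\<close>)
qed

lemma tpal_even: assumes "tpal i j" "i < j" "even (j - i)" shows "(i + j) mod 4 = 0"
proof -
  obtain l where l: "j - i = 2*l" using assms(3) by blast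
  have l1: "l \<ge> 1" using l assms(2) by simp
  have eq: "tb (i+l-1) = tb (i+l)"
    by (rule tpal_at[OF assms(1), of "l-1"]) (use l l1 assms(2) in auto)
  have "even (i+l)"
  proof (rule ccontr)
    assume "odd (i+l)"
    then obtain m where m: "i+l = 2*m+1" using oddE by blast
    have "tb (i+l-1) = tb m" by (rule tb2x(1)) (use m in simp)
    moreover have "tb (i+l) = (\<not> tb m)" by (rule tb2x(2)) (use m in simp)
    ultimately show False using eq by simp
  qed
  then obtain m where "i + l = 2*m" by blast
  then have "i + j = 4*m" using l assms(2) by simp
  then show ?thesis by simp
qed

lemma tpal_odd5: assumes "tpal i j" "odd (j - i)" "j - i \<ge> 5" shows False
proof -
  obtain l where l: "j - i = 2*l+1" using assms(2) oddE by blast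
  have l2: "l \<ge> 2" using l assms(3) by simp
  define c where "c = i + l"
  have e1: "tb (c-1) = tb (c+1)"
    by (rule tpal_at[OF assms(1), of "l-1"]) (use l l2 in \<open>auto simp: c_def\<close>)
  have e2: "tb (c-2) = tb (c+2)"
    by (rule tpal_at[OF assms(1), of "l-2"]) (use l l2 in \<open>auto simp: c_def\<close>)
  have c2: "c \<ge> 2" using l2 unfolding c_def by simp
  show False
  proof (cases "even c")
    case True
    then obtain m where m: "c = 2*m" by blast
    have m1: "m \<ge> 1" using c2 m by simp
    have "tb (c-1) = (\<not> tb (m-1))" by (rule tb2x(2)) (use m m1 in simp)
    moreover have "tb (c-2) = tb (m-1)" by (rule tb2x(1)) (use m m1 in simp)
    moreover have "tb (c+1) = (\<not> tb m)" by (rule tb2x(2)) (use m m1 in simp)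
    moreover have "tb (c+2) = tb (m+1)" by (rule tb2x(1)) (use m m1 in simp)
    ultimately have "tb (m-1) = tb m" "tb m = tb (m+1)" using e1 e2 by auto
    then show False using no_triple[of "m-1"] m1 by simp
  next
    case False
    then obtain m where m: "c = 2*m+1" using oddE by blast
    have m1: "m \<ge> 1" using c2 m by simp
    have "tb (c-1) = tb m" by (rule tb2x(1)) (use m m1 in simp)
    moreover have "tb (c-2) = (\<not> tb (m-1))" by (rule tb2x(2)) (use m m1 in simp)
    moreover have "tb (c+1) = tb (m+1)" by (rule tb2x(1)) (use m m1 in simp)
    moreover have "tb (c+2) = (\<not> tb (m+1))" by (rule tb2x(2)) (use m m1 in simp)
    ultimately have "tb (m-1) = tb m" "tb m = tb (m+1)" using e1 e2 by auto
    then show False using no_triple[of "m-1"] m1 by simp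
  qed
qed

lemma tpal3: assumes "tpal i (i+3)" shows "i mod 4 = 2 \<or> i mod 4 = 3"
proof -
  have e: "tb i = tb (i+2)" by (rule tpal_at[OF assms, of 0]) auto
  define p where "p = i div 4"
  define s where "s = i mod 4"
  have ps: "i = 4*p + s" "s < 4" unfolding p_def s_def by auto
  show ?thesis
  proof (rule ccontr)
    assume "\<not> ?thesis"
    then have "s = 0 \<or> s = 1" using ps unfolding s_def by auto
    then show False
    proof
      assume s: "s = 0"
      have "tb i = tb p" by (rule tb4x(1)) (use ps s in auto)
      moreover have "tb (i+2) = (\<not> tb p)" by (rule tb4x(3)) (use ps s in auto)
      ultimately show False using e by simp
    next
      assume s: "s = 1"
      have "tb i = (\<not> tb p)" by (rule tb4x(2)) (use ps s in auto)
      moreover have "tb (i+2) = tb p" by (rule tb4x(4)) (use ps s in auto)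
      ultimately show False using e by simp
    qed
  qed
qed



lemma tb4_sym: assumes "s \<le> 3" shows "(tb (4*x+s) = tb (4*y+3-s)) = (tb x = tb y)"
proof -
  have "s = 0 \<or> s = 1 \<or> s = 2 \<or> s = 3" using assms by auto
  then show ?thesis
  proof (elim disjE)
    assume s: "s = 0"
    show ?thesis using tb4x(1)[of "4*x" x] tb4x(4)[of "4*y+3" y] s by simp
  next
    assume s: "s = 1"
    show ?thesis using tb4x(2)[of "4*x+1" x] tb4x(3)[of "4*y+2" y] s by simp
  next
    assume s: "s = 2"
    show ?thesis using tb4x(3)[of "4*x+2" x] tb4x(2)[of "4*y+1" y] s by simp
  next
    assume s: "s = 3"
    show ?thesis using tb4x(4)[of "4*x+3" x] tb4x(1)[of "4*y" y] s by simp
  qed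
qed

lemma Pal4_fwd: assumes s: "s \<le> 3" and t: "tpal (4*p+s) (4*q+4-s)" and lt: "4*p+s < 4*q+4-s"
  shows "tpal p (q+1)"
proof -
  have pq: "p \<le> q" using lt by simp
  have K: "tb (p+a) = tb (q-a)" if a: "a < q - p" for a
  proof -
    have "tb (4*(p+a)+s) = tb (4*(q-a)+3-s)"
      by (rule tpal_at[OF t, of "4*a"]) (use a s pq in auto)
    then show ?thesis using tb4_sym[OF s, of "p+a" "q-a"] by blast
  qed
  show ?thesis unfolding tpal_def
  proof (intro allI impI)
    fix a assume a: "a < q + 1 - p"
    show "tb (p + a) = tb (q + 1 - 1 - a)"
    proof (cases "a < q - p")
      case True then show ?thesis using K by simp
    next
      case False
      then have "a = q - p" using a by simp
      moreover have "p < q \<Longrightarrow> tb p = tb q" using K[of 0] by simp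
      ultimately show ?thesis using pq by (cases "p = q") auto
    qed
  qed
qed

lemma Pal4_bwd: assumes s: "s \<le> 3" and t: "tpal p (q+1)"
  shows "tpal (4*p+s) (4*q+4-s)"
  unfolding tpal_def
proof (intro allI impI)
  fix k assume k: "k < 4*q+4-s - (4*p+s)"
  define a where "a = (s+k) div 4"
  define b where "b = (s+k) mod 4"
  have sk: "s + k = 4*a + b" "b < 4" unfolding a_def b_def by auto
  have kk: "4*p + s + k < 4*q + 4 - s" using k by linarith
  have e1: "4*p+s+k = 4*(p+a)+b" using sk by simp
  have "4*(p+a) < 4*(q+1)" using kk e1 unfolding distrib_left by linarith
  then have paq: "p + a \<le> q" by simp
  then have aq: "a \<le> q - p" "p \<le> q" by auto
  have e2: "4*q+4-s-1-k = 4*(q-a)+3-b" using sk paq kk s by linarith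
  have "tb (p+a) = tb (q-a)"
    by (rule tpal_at[OF t, of a]) (use aq in auto)
  then show "tb (4*p+s+k) = tb (4*q+4-s-1-k)"
    unfolding e1 e2 using tb4_sym[of b "p+a" "q-a"] sk by linarith
qed

lemma tpal_class: assumes t: "tpal i N" and iN: "i < N"
  shows "N = i + 1 \<or> (N = i + 3 \<and> (i mod 4 = 2 \<or> i mod 4 = 3)) \<or>
         (\<exists>p q s. s \<le> 3 \<and> i = 4*p+s \<and> N = 4*q+4-s \<and> p \<le> q \<and> tpal p (q+1))"
proof (cases "even (N - i)")
  case True
  have m: "(i + N) mod 4 = 0" by (rule tpal_even[OF t iN True])
  define p where "p = i div 4"
  define s where "s = i mod 4"
  have ps: "i = 4*p+s" "s \<le> 3" unfolding p_def s_def by auto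
  have e: "i + N = (N + s) + 4*p" using ps by simp
  have "(i + N) mod 4 = (N + s) mod 4" unfolding e by (rule mod_mult_self2)
  then have m2: "(N + s) mod 4 = 0" using m by simp
  define r where "r = (N + s) div 4"
  have Nr: "N + s = 4 * r" using m2 div_mult_mod_eq[of "N+s" 4] unfolding r_def by simp
  have "r \<noteq> 0" using Nr iN by auto
  define q where "q = r - 1"
  have Nq: "N = 4*q+4-s" using Nr \<open>r \<noteq> 0\<close> unfolding q_def by linarith
  have pq: "p \<le> q" using Nq ps iN by simp
  have "tpal p (q+1)" by (rule Pal4_fwd[OF ps(2)]) (use t iN ps Nq in auto)
  then show ?thesis using ps Nq pq by blast
next
  case False
  obtain l where l: "N - i = 2*l+1" using False oddE by blast
  have "l = 0 \<or> l = 1 \<or> l \<ge> 2" by linarith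
  then have "N - i = 1 \<or> N - i = 3 \<or> N - i \<ge> 5" using l by auto
  then show ?thesis
  proof (elim disjE)
    assume "N - i = 1" then have "N = i + 1" using iN by linarith
    then show ?thesis by blast
  next
    assume h: "N - i = 3"
    then have "N = i + 3" using iN by linarith
    then show ?thesis using tpal3 t by auto
  next
    assume "N - i \<ge> 5" then show ?thesis using tpal_odd5[OF t False] by simp
  qed
qed



function g :: "nat \<Rightarrow> nat" where
  "g n = (if n = 0 then 0 else if n mod 4 = 0 then g (n div 4)
          else if n mod 4 = 1 then g (n div 4) + 1
          else if n mod 4 = 2 then min (g (n div 4)) (g (n div 4 + 1)) + 2
          else g (n div 4 + 1) + 1)"
  by auto
termination
proof (relation "measure id")
  fix n :: nat
  show "wf (measure id)" by simp
  assume "n \<noteq> 0" then show "(n div 4, n) \<in> measure id" by simp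
next
  fix n :: nat
  assume "n \<noteq> 0" then show "(n div 4, n) \<in> measure id" by simp
next
  fix n :: nat
  assume "n \<noteq> 0" "n mod 4 \<noteq> 0" "n mod 4 \<noteq> 1"
  then show "(n div 4, n) \<in> measure id" by simp
next
  fix n :: nat
  assume a: "n \<noteq> 0" "n mod 4 \<noteq> 0" "n mod 4 \<noteq> 1"
  have "n = 4 * (n div 4) + n mod 4" by simp
  then have "n div 4 + 1 < n" using a by linarith
  then show "(n div 4 + 1, n) \<in> measure id" by simp
next
  fix n :: nat
  assume a: "n \<noteq> 0" "n mod 4 \<noteq> 0" "n mod 4 \<noteq> 1" "n mod 4 \<noteq> 2"
  have "n = 4 * (n div 4) + n mod 4" by simp
  then have "n div 4 + 1 < n" using a by linarith
  then show "(n div 4 + 1, n) \<in> measure id" by simp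
qed

declare g.simps[simp del]

lemma g0: "g 0 = 0" by (simp add: g.simps)

lemma gm: "n mod 4 = 0 \<Longrightarrow> g n = g (n div 4)" "n mod 4 = 1 \<Longrightarrow> g n = g (n div 4) + 1"
  "n mod 4 = 2 \<Longrightarrow> g n = min (g (n div 4)) (g (n div 4 + 1)) + 2"
  "n mod 4 = 3 \<Longrightarrow> g n = g (n div 4 + 1) + 1"
  by (cases "n = 0"; simp add: g.simps[of n] g0)+

lemma g4x: "x = 4*n \<Longrightarrow> g x = g n" "x = 4*n+1 \<Longrightarrow> g x = g n + 1"
  "x = 4*n+2 \<Longrightarrow> g x = min (g n) (g (n+1)) + 2" "x = 4*n+3 \<Longrightarrow> g x = g (n+1) + 1"
proof -
  assume x: "x = 4*n"
  then have "x mod 4 = 0" "x div 4 = n" by presburger+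
  then show "g x = g n" using gm(1)[of x] by simp
next
  assume x: "x = 4*n+1"
  then have "x mod 4 = 1" "x div 4 = n" by presburger+
  then show "g x = g n + 1" using gm(2)[of x] by simp
next
  assume x: "x = 4*n+2"
  then have "x mod 4 = 2" "x div 4 = n" by presburger+
  then show "g x = min (g n) (g (n+1)) + 2" using gm(3)[of x] by simp
next
  assume x: "x = 4*n+3"
  then have "x mod 4 = 3" "x div 4 = n" by presburger+
  then show "g x = g (n+1) + 1" using gm(4)[of x] by simp
qed

lemma cases4: fixes m :: nat obtains n where "m = 4*n" | n where "m = 4*n+1" | n where "m = 4*n+2" | n where "m = 4*n+3"
proof -
  have "m = 4 * (m div 4) + m mod 4" by simp
  moreover have "m mod 4 = 0 \<or> m mod 4 = 1 \<or> m mod 4 = 2 \<or> m mod 4 = 3" by linarith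
  ultimately show ?thesis
  proof (elim disjE)
    assume "m = 4 * (m div 4) + m mod 4" "m mod 4 = 0" then show ?thesis using that(1)[of "m div 4"] by simp
  next
    assume "m = 4 * (m div 4) + m mod 4" "m mod 4 = 1" then show ?thesis using that(2)[of "m div 4"] by simp
  next
    assume "m = 4 * (m div 4) + m mod 4" "m mod 4 = 2" then show ?thesis using that(3)[of "m div 4"] by simp
  next
    assume "m = 4 * (m div 4) + m mod 4" "m mod 4 = 3" then show ?thesis using that(4)[of "m div 4"] by simp
  qed
qed

lemma g_L1: "g (m+1) \<le> g m + 1"
proof (induction m rule: less_induct)
  case (less m)
  show ?case
  proof (cases m rule: cases4)
    case (1 n)
    then show ?thesis using g4x(1)[of m n] g4x(2)[of "m+1" n] by simp
  next
    case (2 n)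
    then show ?thesis using g4x(2)[of m n] g4x(3)[of "m+1" n] by simp
  next
    case (3 n)
    have "g (n+1) \<le> g n + 1" using less 3 by simp
    then show ?thesis using 3 g4x(3)[of m n] g4x(4)[of "m+1" n] by simp
  next
    case (4 n)
    then show ?thesis using g4x(4)[of m n] g4x(1)[of "m+1" "n+1"] by simp
  qed
qed

lemma lemmaG: "i < N \<Longrightarrow> tpal i N \<Longrightarrow> g N \<le> g i + 1"
proof (induction N arbitrary: i rule: less_induct)
  case (less N)
  have t: "tpal i N" and iN: "i < N" by fact+
  from tpal_class[OF t iN] show ?case
  proof (elim disjE conjE exE)
    assume "N = i + 1" then show ?thesis using g_L1[of i] by simp
  next
    assume N3: "N = i + 3" and "i mod 4 = 2"
    then obtain p where p: "i = 4*p+2" by (metis div_mult_mod_eq mult.commute)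
    have "g N = g (p+1) + 1" by (rule g4x(2)) (use N3 p in simp)
    moreover have "g i = min (g p) (g (p+1)) + 2" by (rule g4x(3)) (use p in simp)
    ultimately show ?thesis using g_L1[of p] by simp
  next
    assume N3: "N = i + 3" and "i mod 4 = 3"
    then obtain p where p: "i = 4*p+3" by (metis div_mult_mod_eq mult.commute)
    have "g N = min (g (p+1)) (g (p+1+1)) + 2" by (rule g4x(3)) (use N3 p in simp)
    moreover have "g i = g (p+1) + 1" by (rule g4x(4)) (use p in simp)
    ultimately show ?thesis by simp
  next
    fix p q s
    assume s: "s \<le> 3" and ip: "i = 4*p+s" and Nq: "N = 4*q+4-s" and pq: "p \<le> q" and tp: "tpal p (q+1)"
    have "s = 0 \<or> s = 1 \<or> s = 2 \<or> s = 3" using s by auto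
    then show ?thesis
    proof (elim disjE)
      assume s0: "s = 0"
      have "g N = g (q+1)" by (rule g4x(1)) (use Nq s0 in simp)
      moreover have "g i = g p" by (rule g4x(1)) (use ip s0 in simp)
      moreover have "g (q+1) \<le> g p + 1" by (rule less.IH) (use tp pq Nq s0 in auto)
      ultimately show ?thesis by simp
    next
      assume s1: "s = 1"
      have "g N = g (q+1) + 1" by (rule g4x(4)) (use Nq s1 in simp)
      moreover have "g i = g p + 1" by (rule g4x(2)) (use ip s1 in simp)
      moreover have "g (q+1) \<le> g p + 1" by (rule less.IH) (use tp pq Nq s1 in auto)
      ultimately show ?thesis by simp
    next
      assume s2: "s = 2"
      have pq': "p < q" using iN ip Nq s2 by simp
      have "g N = min (g q) (g (q+1)) + 2" by (rule g4x(3)) (use Nq s2 in simp)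
      moreover have "g i = min (g p) (g (p+1)) + 2" by (rule g4x(3)) (use ip s2 in simp)
      moreover have "g (q+1) \<le> g p + 1" by (rule less.IH) (use tp pq Nq s2 in auto)
      moreover have "g q \<le> g (p+1) + 1"
      proof (cases "p + 1 = q")
        case True then show ?thesis by simp
      next
        case False
        have "tpal (p+1) q" using tpal_inner[OF tp] by simp
        then show ?thesis by (intro less.IH) (use False pq' Nq s2 in auto)
      qed
      ultimately show ?thesis by simp
    next
      assume s3: "s = 3"
      have pq': "p < q" using iN ip Nq s3 by simp
      have "g N = g q + 1" by (rule g4x(2)) (use Nq s3 in simp)
      moreover have "g i = g (p+1) + 1" by (rule g4x(4)) (use ip s3 in simp)
      moreover have "g q \<le> g (p+1) + 1"
      proof (cases "p + 1 = q")
        case True then show ?thesis by simp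
      next
        case False
        have "tpal (p+1) q" using tpal_inner[OF tp] by simp
        then show ?thesis by (intro less.IH) (use False pq' Nq s3 in auto)
      qed
      ultimately show ?thesis by simp
    qed
  qed
qed



theorem PP_g: "PP N = g N"
proof (induction N rule: less_induct)
  case (less N)
  show ?case
  proof (cases "N = 0")
    case True then show ?thesis by (simp add: PP0 g0)
  next
    case False
    then have N0: "0 < N" by simp
    obtain i where i: "i < N" "tpal i N" "PP N = PP i + 1" using PP_dec[OF N0] by blast
    have lo: "g N \<le> PP N" using lemmaG[OF i(1,2)] less.IH[OF i(1)] i(3) by simp
    have up: "PP N \<le> g N"
    proof (cases N rule: cases4)
      case (1 n)
      have n0: "0 < n" "n < N" using 1 N0 by auto
      obtain p where p: "p < n" "tpal p n" "PP n = PP p + 1" using PP_dec[OF n0(1)] by blast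
      have "tpal (4*p+0) (4*(n-1)+4-0)" by (rule Pal4_bwd) (use p n0 in simp_all)
      moreover have "4*(n-1)+4-0 = N" using 1 n0 by simp
      ultimately have tp: "tpal (4*p) N" by simp
      have "PP N \<le> PP (4*p) + 1" by (rule PP_step[OF _ tp]) (use 1 p in simp)
      also have "PP (4*p) = g (4*p)" by (rule less.IH) (use 1 p in simp)
      also have "g (4*p) = g p" by (rule g4x(1)) simp
      also have "g p = PP p" using less.IH[of p] p n0 by simp
      also have "PP p + 1 = PP n" using p by simp
      also have "PP n = g n" using less.IH[of n] n0 by simp
      also have "g n = g N" using g4x(1)[of N n] 1 by simp
      finally show ?thesis .
    next
      case (2 n)
      have tp: "tpal (4*n) N" using tpal_single[of "4*n"] 2 by simp
      have "PP N \<le> PP (4*n) + 1" by (rule PP_step[OF _ tp]) (use 2 in simp)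
      also have "PP (4*n) = g (4*n)" by (rule less.IH) (use 2 in simp)
      also have "g (4*n) + 1 = g N" using g4x(1)[of "4*n" n] g4x(2)[of N n] 2 by simp
      finally show ?thesis .
    next
      case (3 n)
      have gN: "g N = min (g n) (g (n+1)) + 2" using g4x(3)[of N n] 3 by simp
      show ?thesis
      proof (cases "g n \<le> g (n+1)")
        case True
        have tp: "tpal (4*n+1) N" using tpal_single[of "4*n+1"] 3 by simp
        have "PP N \<le> PP (4*n+1) + 1" by (rule PP_step[OF _ tp]) (use 3 in simp)
        also have "PP (4*n+1) = g (4*n+1)" by (rule less.IH) (use 3 in simp)
        also have "g (4*n+1) + 1 = g N" using g4x(2)[of "4*n+1" n] gN True by simp
        finally show ?thesis .
      next
        case False
        have n0: "0 < n+1" "n+1 < N" using 3 by auto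
        obtain p where p: "p < n+1" "tpal p (n+1)" "PP (n+1) = PP p + 1" using PP_dec[OF n0(1)] by blast
        have PPn1: "PP (n+1) = g (n+1)" using less.IH[of "n+1"] n0 by simp
        have pn: "p < n"
        proof (rule ccontr)
          assume "\<not> p < n"
          then have "p = n" using p by simp
          moreover have "PP n = g n" using less.IH[of n] 3 by simp
          ultimately show False using p(3) PPn1 False by simp
        qed
        have "tpal (4*p+2) (4*n+4-2)" by (rule Pal4_bwd) (use p in simp_all)
        moreover have "4*n+4-2 = N" using 3 by simp
        ultimately have tp: "tpal (4*p+2) N" by simp
        have "PP N \<le> PP (4*p+2) + 1" by (rule PP_step[OF _ tp]) (use 3 pn in simp)
        also have "PP (4*p+2) = g (4*p+2)" by (rule less.IH) (use 3 pn in simp)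
        also have "g (4*p+2) = min (g p) (g (p+1)) + 2" by (rule g4x(3)) simp
        also have "min (g p) (g (p+1)) + 2 + 1 \<le> g p + 3" by simp
        also have "g p = PP p" using less.IH[of p] pn 3 by simp
        also have "PP p + 3 = PP (n+1) + 2" using p by simp
        also have "\<dots> = g N" using PPn1 gN False by simp
        finally show ?thesis .
      qed
    next
      case (4 n)
      have n0: "0 < n+1" "n+1 < N" using 4 by auto
      obtain p where p: "p < n+1" "tpal p (n+1)" "PP (n+1) = PP p + 1" using PP_dec[OF n0(1)] by blast
      have PPn1: "PP (n+1) = g (n+1)" using less.IH[of "n+1"] n0 by simp
      have "tpal (4*p+1) (4*n+4-1)" by (rule Pal4_bwd) (use p in simp_all)
      moreover have "4*n+4-1 = N" using 4 by simp
      ultimately have tp: "tpal (4*p+1) N" by simp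
      have "PP N \<le> PP (4*p+1) + 1" by (rule PP_step[OF _ tp]) (use 4 p in simp)
      also have "PP (4*p+1) = g (4*p+1)" by (rule less.IH) (use 4 p in simp)
      also have "g (4*p+1) = g p + 1" by (rule g4x(2)) simp
      also have "g p = PP p" using less.IH[of p] p 4 by simp
      also have "PP p + 1 + 1 = PP (n+1) + 1" using p by simp
      also have "\<dots> = g N" using PPn1 g4x(4)[of N n] 4 by simp
      finally show ?thesis .
    qed
    show ?thesis using lo up by simp
  qed
qed



fun bb :: "nat \<Rightarrow> nat" where
  "bb 0 = 0" | "bb (Suc 0) = 1" | "bb (Suc (Suc 0)) = 2"
| "bb (Suc (Suc (Suc k))) = 16 * bb k + 6"

definition aa :: "nat \<Rightarrow> nat" where
  "aa k = (if k = 0 then 0 else if k = 1 then 1 else 4 * bb (k-2) + 2)"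

lemma aa2: "aa (k+2) = 4 * bb k + 2" by (simp add: aa_def)
lemma aa2x: "x = k+2 \<Longrightarrow> aa x = 4 * bb k + 2" by (simp add: aa_def)

lemma bb3: "bb (k+3) = 16 * bb k + 6" by (simp add: numeral_eq_Suc)
lemma bb3x: "x = k+3 \<Longrightarrow> bb x = 16 * bb k + 6" by (simp add: numeral_eq_Suc)

lemma bb_i1: "bb (j+1) \<le> 4 * bb j + 1"
proof (induction j rule: less_induct)
  case (less j)
  show ?case
  proof (cases "j \<le> 2")
    case True
    then have "j = 0 \<or> j = 1 \<or> j = 2" by auto
    then show ?thesis by (auto simp: numeral_eq_Suc)
  next
    case False
    then obtain i where i: "j = i + 3" by (metis add.commute le_Suc_ex not_le Suc_leI numeral_3_eq_3 add_2_eq_Suc' less_Suc_eq_le numeral_2_eq_2)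
    have "bb (i+1) \<le> 4 * bb i + 1" using less i by simp
    moreover have "bb (j+1) = 16 * bb (i+1) + 6" by (rule bb3x) (use i in simp)
    moreover have "bb j = 16 * bb i + 6" by (rule bb3x) (use i in simp)
    ultimately show ?thesis by simp
  qed
qed

lemma bb_mono: "bb j < bb (j+1)"
proof (induction j rule: less_induct)
  case (less j)
  show ?case
  proof (cases "j \<le> 2")
    case True
    then have "j = 0 \<or> j = 1 \<or> j = 2" by auto
    then show ?thesis by (auto simp: numeral_eq_Suc)
  next
    case False
    then obtain i where i: "j = i + 3" by (metis add.commute le_Suc_ex not_le Suc_leI numeral_3_eq_3 add_2_eq_Suc' less_Suc_eq_le numeral_2_eq_2)
    have "bb i < bb (i+1)" using less i by simp
    moreover have "bb (j+1) = 16 * bb (i+1) + 6" by (rule bb3x) (use i in simp)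
    moreover have "bb j = 16 * bb i + 6" by (rule bb3x) (use i in simp)
    ultimately show ?thesis by simp
  qed
qed

lemma A1: "k \<ge> 1 \<Longrightarrow> aa k \<le> 4 * aa (k-1) + 1"
proof -
  assume k: "k \<ge> 1"
  consider "k = 1" | "k = 2" | i where "k = i + 3" using k
    by (metis One_nat_def add.commute add_2_eq_Suc' le_Suc_ex numeral_3_eq_3 not_less_eq_eq Suc_le_eq le_antisym nat_le_linear numeral_2_eq_2 add_Suc_shift)
  then show ?thesis
  proof cases
    case 1 then show ?thesis by (simp add: aa_def)
  next
    case 2 then show ?thesis by (simp add: aa_def)
  next
    case (3 i)
    have "aa k = 4 * bb (i+1) + 2" by (rule aa2x) (use 3 in simp)
    moreover have "aa (k-1) = 4 * bb i + 2" by (rule aa2x) (use 3 in simp)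
    ultimately show ?thesis using bb_i1[of i] by simp
  qed
qed

lemma A2: "k \<ge> 3 \<Longrightarrow> aa k + 1 \<le> 4 * aa (k-1)"
proof -
  assume k: "k \<ge> 3"
  then obtain i where i: "k = i + 3" by (metis add.commute le_Suc_ex)
  have "aa k = 4 * bb (i+1) + 2" by (rule aa2x) (use i in simp)
  moreover have "aa (k-1) = 4 * bb i + 2" by (rule aa2x) (use i in simp)
  ultimately show ?thesis using bb_i1[of i] by simp
qed

lemma B2: "k \<ge> 3 \<Longrightarrow> bb k + 2 = 4 * aa (k-1)"
proof -
  assume k: "k \<ge> 3"
  then obtain i where i: "k = i + 3" by (metis add.commute le_Suc_ex)
  have "aa (k-1) = 4 * bb i + 2" by (rule aa2x) (use i in simp)
  moreover have "bb k = 16 * bb i + 6" by (rule bb3x) (use i in simp)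
  ultimately show ?thesis by simp
qed

lemma B1: "k \<ge> 1 \<Longrightarrow> bb k \<le> 4 * aa (k-1) + 1"
proof -
  assume k: "k \<ge> 1"
  show ?thesis
  proof (cases "k \<ge> 3")
    case True then show ?thesis using B2[of k] by simp
  next
    case False
    then have "k = 1 \<or> k = 2" using k by auto
    then show ?thesis by (auto simp: aa_def numeral_eq_Suc)
  qed
qed

lemma B3: "k \<ge> 1 \<Longrightarrow> bb k + 1 \<le> 4 * aa k"
proof -
  assume k: "k \<ge> 1"
  show ?thesis
  proof (cases "k \<ge> 3")
    case True
    then obtain i where i: "k = i + 3" by (metis add.commute le_Suc_ex)
    have "aa k = 4 * bb (i+1) + 2" by (rule aa2x) (use i in simp)
    moreover have "bb k = 16 * bb i + 6" by (rule bb3x) (use i in simp)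
    moreover have "bb (i+1) \<ge> bb i" using bb_mono[of i] by simp
    ultimately show ?thesis by simp
  next
    case False
    then have "k = 1 \<or> k = 2" using k by auto
    then show ?thesis by (auto simp: aa_def numeral_eq_Suc)
  qed
qed

lemma aa_small: "k \<le> 2 \<Longrightarrow> aa k \<le> 2" by (auto simp: aa_def)
lemma bb_small: "k \<le> 2 \<Longrightarrow> bb k \<le> 2"
proof -
  assume "k \<le> 2" then have "k = 0 \<or> k = 1 \<or> k = 2" by auto
  then show ?thesis by (auto simp: numeral_eq_Suc)
qed

lemma g1: "g 1 = 1" using g4x(2)[of 1 0] g0 by simp
lemma g2: "g 2 = 2" using g4x(3)[of 2 0] g0 g1 by simp
lemma g3: "g 3 = 2" using g4x(4)[of 3 0] g1 by simp

lemma DC: "(\<forall>k. k \<le> g m \<longrightarrow> aa k \<le> m) \<and> (\<forall>k. k \<le> g m \<and> k \<le> g (m+1) \<longrightarrow> bb k \<le> m)"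
proof (induction m rule: less_induct)
  case (less m)
  show ?case
  proof (cases m rule: cases4)
    case (1 n)
    show ?thesis
    proof (cases "n = 0")
      case True
      then have m0: "m = 0" using 1 by simp
      show ?thesis using m0 g0 by (auto simp: aa_def)
    next
      case False
      then have nm: "n < m" using 1 by simp
      have gm: "g m = g n" "g (m+1) = g n + 1" using g4x(1)[of m n] g4x(2)[of "m+1" n] 1 by simp_all
      have IH: "\<forall>k. k \<le> g n \<longrightarrow> aa k \<le> n" using less.IH[OF nm] by blast
      show ?thesis
      proof (intro conjI allI impI)
        fix k assume "k \<le> g m" then have "k \<le> g n" using gm by simp
        then show "aa k \<le> m" using IH nm by force
      next
        fix k assume h: "k \<le> g m \<and> k \<le> g (m+1)"
        show "bb k \<le> m"
        proof (cases "k = 0")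
          case True then show ?thesis by simp
        next
          case False
          have "k \<le> g n" using h gm by simp
          then have "aa k \<le> n" using IH by blast
          then show ?thesis using B3[of k] False 1 by simp
        qed
      qed
    qed
  next
    case (2 n)
    have nm: "n < m" using 2 by simp
    have gm: "g m = g n + 1" "g (m+1) = min (g n) (g (n+1)) + 2"
      using g4x(2)[of m n] g4x(3)[of "m+1" n] 2 by simp_all
    have IH: "\<forall>k. k \<le> g n \<longrightarrow> aa k \<le> n" using less.IH[OF nm] by blast
    show ?thesis
    proof (intro conjI allI impI)
      fix k assume h: "k \<le> g m"
      show "aa k \<le> m"
      proof (cases "k = 0")
        case True then show ?thesis by (simp add: aa_def)
      next
        case False
        have "k - 1 \<le> g n" using h gm by simp
        then have "aa (k-1) \<le> n" using IH by blast
        then show ?thesis using A1[of k] False 2 by simp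
      qed
    next
      fix k assume h: "k \<le> g m \<and> k \<le> g (m+1)"
      show "bb k \<le> m"
      proof (cases "k = 0")
        case True then show ?thesis by simp
      next
        case False
        have "k \<le> g n + 1" using h gm by simp
        then have "k - 1 \<le> g n" by linarith
        then have "aa (k-1) \<le> n" using IH by blast
        then show ?thesis using B1[of k] False 2 by simp
      qed
    qed
  next
    case (3 n)
    have nm: "n < m" "n + 1 < m" using 3 by simp_all
    have gm: "g m = min (g n) (g (n+1)) + 2" "g (m+1) = g (n+1) + 1"
      using g4x(3)[of m n] g4x(4)[of "m+1" n] 3 by simp_all
    have IHC: "\<forall>k. k \<le> g n \<and> k \<le> g (n+1) \<longrightarrow> bb k \<le> n" using less.IH[OF nm(1)] by blast
    have IHD: "\<forall>k. k \<le> g (n+1) \<longrightarrow> aa k \<le> n+1" using less.IH[OF nm(2)] by blast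
    show ?thesis
    proof (intro conjI allI impI)
      fix k assume h: "k \<le> g m"
      show "aa k \<le> m"
      proof (cases "k \<le> 2")
        case True then show ?thesis using aa_small[of k] 3 by simp
      next
        case False
        then obtain j where j: "k = j + 2" by (metis add.commute le_Suc_ex not_le_imp_less less_imp_le_nat)
        have "j \<le> g n \<and> j \<le> g (n+1)" using h gm j by simp
        then have "bb j \<le> n" using IHC by blast
        moreover have "aa k = 4 * bb j + 2" by (rule aa2x) (use j in simp)
        ultimately show ?thesis using 3 by simp
      qed
    next
      fix k assume h: "k \<le> g m \<and> k \<le> g (m+1)"
      show "bb k \<le> m"
      proof (cases "k \<le> 2")
        case True then show ?thesis using bb_small[of k] 3 by simp
      next
        case False
        have "k - 1 \<le> g (n+1)" using h gm by (auto simp: min_def split: if_splits)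
        then have "aa (k-1) \<le> n+1" using IHD by blast
        then show ?thesis using B2[of k] False 3 by simp
      qed
    qed
  next
    case (4 n)
    have nm: "n + 1 < m" using 4 by simp
    have gm: "g m = g (n+1) + 1" "g (m+1) = g (n+1)"
      using g4x(4)[of m n] g4x(1)[of "m+1" "n+1"] 4 by simp_all
    have IHD: "\<forall>k. k \<le> g (n+1) \<longrightarrow> aa k \<le> n+1" using less.IH[OF nm] by blast
    show ?thesis
    proof (intro conjI allI impI)
      fix k assume h: "k \<le> g m"
      show "aa k \<le> m"
      proof (cases "k \<le> 2")
        case True then show ?thesis using aa_small[of k] 4 by simp
      next
        case False
        have "k - 1 \<le> g (n+1)" using h gm by (auto simp: min_def split: if_splits)
        then have "aa (k-1) \<le> n+1" using IHD by blast
        then show ?thesis using A2[of k] False 4 by simp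
      qed
    next
      fix k assume h: "k \<le> g m \<and> k \<le> g (m+1)"
      show "bb k \<le> m"
      proof (cases "k = 0")
        case True then show ?thesis by simp
      next
        case False
        have "k \<le> g (n+1)" using h gm by simp
        then have "aa k \<le> n+1" using IHD by blast
        then show ?thesis using B3[of k] False 4 by simp
      qed
    qed
  qed
qed

lemma Cgood: "k \<le> g (bb k) \<and> k \<le> g (bb k + 1)"
proof (induction k rule: less_induct)
  case (less k)
  show ?case
  proof (cases "k \<le> 2")
    case True
    then have "k = 0 \<or> k = 1 \<or> k = 2" by auto
    then show ?thesis using g1 g2 g3 by (auto simp: numeral_eq_Suc)
  next
    case False
    then obtain i where i: "k = i + 3" by (metis add.commute le_Suc_ex not_le Suc_leI numeral_3_eq_3 add_2_eq_Suc' less_Suc_eq_le numeral_2_eq_2)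
    have IH: "i \<le> g (bb i)" "i \<le> g (bb i + 1)" using less.IH[of i] i by auto
    have "bb k = 16 * bb i + 6" by (rule bb3x) (use i in simp)
    then have bk: "bb k = 4 * (4 * bb i + 1) + 2" by simp
    have ga: "g (4 * bb i + 1) = g (bb i) + 1" by (rule g4x(2)) simp
    have gb: "g (4 * bb i + 2) = min (g (bb i)) (g (bb i + 1)) + 2" by (rule g4x(3)) simp
    have "g (bb k) = min (g (4 * bb i + 1)) (g (4 * bb i + 1 + 1)) + 2" by (rule g4x(3)) (use bk in simp)
    moreover have "g (bb k + 1) = g (4 * bb i + 1 + 1) + 1" by (rule g4x(4)) (use bk in simp)
    ultimately show ?thesis using IH ga gb i by simp
  qed
qed

lemma g_aa: "g (aa (k+2)) = k + 2"
proof -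
  have ge: "k + 2 \<le> g (aa (k+2))"
  proof -
    have "g (aa (k+2)) = min (g (bb k)) (g (bb k + 1)) + 2" by (rule g4x(3)) (rule aa2)
    then show ?thesis using Cgood[of k] by simp
  qed
  show ?thesis
  proof (rule ccontr)
    assume "g (aa (k+2)) \<noteq> k + 2"
    then have "k + 3 \<le> g (aa (k+2))" using ge by simp
    then have "aa (k+3) \<le> aa (k+2)" using DC[of "aa (k+2)"] by blast
    moreover have "aa (k+3) = 4 * bb (k+1) + 2" by (rule aa2x) simp
    ultimately show False using bb_mono[of k] aa2[of k] by simp
  qed
qed

lemma SP_aa: "SP_t (k+2) = aa (k+2)"
proof -
  have "SP_t (k+2) = (LEAST n. g n = k+2)" by (simp add: SP_t_def PPL_PP PP_g)
  also have "\<dots> = aa (k+2)"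
  proof (rule Least_equality)
    show "g (aa (k+2)) = k+2" by (rule g_aa)
  next
    fix y assume "g y = k + 2"
    then show "aa (k+2) \<le> y" using DC[of y] by simp
  qed
  finally show ?thesis .
qed

lemma base4_snoc: "base4 (xs @ [d]) = 4 * base4 xs + d" by (simp add: base4_def)

lemma base4_12: "base4 (xs @ [1,2]) = 16 * base4 xs + 6"
proof -
  have "xs @ [1,2] = (xs @ [1]) @ [2]" by simp
  then show ?thesis by (simp only: base4_snoc) simp
qed

lemma rep_Suc: "concat (replicate (Suc j) [1::nat,2]) = concat (replicate j [1,2]) @ [1,2]"
  by (simp add: replicate_append_same[symmetric])

lemma base4_R: "base4 (concat (replicate j [1,2])) = bb (3*j) \<and>
                base4 ([1] @ concat (replicate j [1,2])) = bb (3*j+1) \<and>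
                base4 ([2] @ concat (replicate j [1,2])) = bb (3*j+2)"
proof (induction j)
  case 0 then show ?case by (simp add: base4_def)
next
  case (Suc j)
  have b1: "bb (3 * Suc j) = 16 * bb (3*j) + 6" "bb (3 * Suc j + 1) = 16 * bb (3*j+1) + 6"
    "bb (3 * Suc j + 2) = 16 * bb (3*j+2) + 6" by (rule bb3x, simp)+
  show ?case unfolding rep_Suc
    using Suc b1 base4_12[of "concat (replicate j [1,2])"] base4_12[of "[1] @ concat (replicate j [1,2])"]
      base4_12[of "[2] @ concat (replicate j [1,2])"] by simp
qed

theorem corollary15:
  shows "(\<forall>k::nat. SP_t (3*k+2) = base4 (concat (replicate k [1,2]) @ [2])) \<and>
         (\<forall>k::nat. k \<ge> 1 \<longrightarrow> SP_t (3*k) = base4 ([1] @ concat (replicate (k-1) [1,2]) @ [2])) \<and>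
         (\<forall>k::nat. k \<ge> 1 \<longrightarrow> SP_t (3*k+1) = base4 ([2] @ concat (replicate (k-1) [1,2]) @ [2]))"
proof (intro conjI allI impI)
  fix k :: nat
  have "SP_t (3*k+2) = aa (3*k+2)" by (rule SP_aa)
  also have "\<dots> = 4 * bb (3*k) + 2" by (rule aa2)
  also have "\<dots> = base4 (concat (replicate k [1,2]) @ [2])" using base4_R[of k] by (simp add: base4_snoc)
  finally show "SP_t (3*k+2) = base4 (concat (replicate k [1,2]) @ [2])" .
next
  fix k :: nat assume k: "k \<ge> 1"
  then obtain j where j: "k = j + 1" by (metis add.commute le_Suc_ex)
  have e: "3*k = (3*j+1)+2" using j by simp
  have "SP_t (3*k) = SP_t ((3*j+1)+2)" by (simp only: e)
  also have "\<dots> = aa ((3*j+1)+2)" by (rule SP_aa)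
  also have "\<dots> = 4 * bb (3*j+1) + 2" by (rule aa2)
  also have "\<dots> = base4 (([1] @ concat (replicate j [1,2])) @ [2])" using base4_R[of j] by (simp only: base4_snoc)
  finally show "SP_t (3*k) = base4 ([1] @ concat (replicate (k-1) [1,2]) @ [2])" using j by simp
next
  fix k :: nat assume k: "k \<ge> 1"
  then obtain j where j: "k = j + 1" by (metis add.commute le_Suc_ex)
  have e: "3*k+1 = (3*j+2)+2" using j by simp
  have "SP_t (3*k+1) = SP_t ((3*j+2)+2)" by (simp only: e)
  also have "\<dots> = aa ((3*j+2)+2)" by (rule SP_aa)
  also have "\<dots> = 4 * bb (3*j+2) + 2" by (rule aa2)
  also have "\<dots> = base4 (([2] @ concat (replicate j [1,2])) @ [2])" using base4_R[of j] by (simp only: base4_snoc)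
  finally show "SP_t (3*k+1) = base4 ([2] @ concat (replicate (k-1) [1,2]) @ [2])" using j by simp
qed

end
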